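(* Let $\Bbbk$ be a field of characteristic zero. For every $\lambda\in\Bbbk^*$, the Lie algebra $\mathcal O(\lambda)$ is not perfect, and therefore is not simple.
   Context: $\mathcal W=\Bbbk[t,t^{-1}]\partial$ is the Witt algebra with basis $L_n=-t^{n+1}\partial$ and $[L_n,L_m]=(n-m)L_{n+m}$. For $\lambda\in\Bbbk^*$, $\mathcal O(\lambda)$ is the subalgebra spanned by $L_n-\lambda^nL_{-n}$, $n\ge1$. A Lie algebra $\mathfrak g$ is perfect if $[\mathfrak g,\mathfrak g]=\mathfrak g$. *)

theory Defs
  imports Main
begin

text \<open>The Witt algebra W = k[t,t^-1] d over a field k, modelled concretely:
  an element is its coefficient function int => k with respect to the basis L_n,
  required to have finite support.\<close>

definition witt :: "(int \<Rightarrow> 'k::field) set" where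
  "witt = {x. finite {n. x n \<noteq> 0}}"

definition witt_L :: "int \<Rightarrow> int \<Rightarrow> 'k::field" where
  "witt_L n = (\<lambda>m. if m = n then 1 else 0)"

text \<open>Bilinear extension of [L_i, L_j] = (i - j) L_(i+j): the coefficient at n
  is the sum over i + j = n of (i - j) x_i y_j.\<close>
definition witt_bracket :: "(int \<Rightarrow> 'k::field) \<Rightarrow> (int \<Rightarrow> 'k) \<Rightarrow> (int \<Rightarrow> 'k)" where
  "witt_bracket x y = (\<lambda>n. \<Sum>i\<in>{i. x i \<noteq> 0}. of_int (i - (n - i)) * x i * y (n - i))"

definition lin_span :: "(int \<Rightarrow> 'k::field) set \<Rightarrow> (int \<Rightarrow> 'k) set" where
  "lin_span S = {x. \<exists>F c. finite F \<and> F \<subseteq> S \<and> x = (\<lambda>m. \<Sum>v\<in>F. c v * v m)}"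

definition O_sub :: "'k::field \<Rightarrow> (int \<Rightarrow> 'k) set" where
  "O_sub lam = lin_span {(\<lambda>m. witt_L (int n) m - lam ^ n * witt_L (- int n) m) | n::nat. n \<ge> 1}"

definition derived :: "(int \<Rightarrow> 'k::field) set \<Rightarrow> (int \<Rightarrow> 'k) set" where
  "derived g = lin_span {witt_bracket x y | x y. x \<in> g \<and> y \<in> g}"

definition perfect :: "(int \<Rightarrow> 'k::field) set \<Rightarrow> bool" where
  "perfect g \<longleftrightarrow> derived g = g"

definition lie_ideal :: "(int \<Rightarrow> 'k::field) set \<Rightarrow> (int \<Rightarrow> 'k) set \<Rightarrow> bool" where
  "lie_ideal g I \<longleftrightarrow> I \<subseteq> g \<and> lin_span I = I \<and> (\<forall>x\<in>g. \<forall>y\<in>I. witt_bracket x y \<in> I)"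

definition simple_lie :: "(int \<Rightarrow> 'k::field) set \<Rightarrow> bool" where
  "simple_lie g \<longleftrightarrow> (\<exists>x\<in>g. \<exists>y\<in>g. witt_bracket x y \<noteq> (\<lambda>_. 0))
      \<and> (\<forall>I. lie_ideal g I \<longrightarrow> I = {\<lambda>_. 0} \<or> I = g)"

end

theory Submission
  imports Defs
begin

lemma span_zero: "(\<lambda>m. 0) \<in> lin_span S"
  unfolding lin_span_def by (rule CollectI, rule exI[of _ "{}"]) auto

lemma span_base: "x \<in> S \<Longrightarrow> x \<in> lin_span S"
  unfolding lin_span_def by (rule CollectI, rule exI[of _ "{x}"], rule exI[of _ "\<lambda>_. 1"]) auto

lemma span_smult: "x \<in> lin_span S \<Longrightarrow> (\<lambda>m. a * x m) \<in> lin_span S"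
proof -
  assume "x \<in> lin_span S"
  then obtain F c where "finite F" "F \<subseteq> S" "x = (\<lambda>m. \<Sum>v\<in>F. c v * v m)" unfolding lin_span_def by blast
  then show ?thesis unfolding lin_span_def
    by (intro CollectI exI[of _ F] exI[of _ "\<lambda>v. a * c v"]) (auto simp: sum_distrib_left mult.assoc)
qed

lemma span_add: "x \<in> lin_span S \<Longrightarrow> y \<in> lin_span S \<Longrightarrow> (\<lambda>m. x m + y m) \<in> lin_span S"
proof -
  assume "x \<in> lin_span S" "y \<in> lin_span S"
  then obtain F c G d where F: "finite F" "F \<subseteq> S" "x = (\<lambda>m. \<Sum>v\<in>F. c v * v m)"
    and G: "finite G" "G \<subseteq> S" "y = (\<lambda>m. \<Sum>v\<in>G. d v * v m)" unfolding lin_span_def by blast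
  define e where "e v = (if v \<in> F then c v else 0) + (if v \<in> G then d v else 0)" for v
  have "(\<lambda>m. x m + y m) = (\<lambda>m. \<Sum>v\<in>F \<union> G. e v * v m)"
  proof
    fix m
    have 1: "(\<Sum>v\<in>F \<union> G. (if v \<in> F then c v else 0) * v m) = (\<Sum>v\<in>F. c v * v m)"
      by (rule sum.mono_neutral_cong_right) (use F G in auto)
    have 2: "(\<Sum>v\<in>F \<union> G. (if v \<in> G then d v else 0) * v m) = (\<Sum>v\<in>G. d v * v m)"
      by (rule sum.mono_neutral_cong_right) (use F G in auto)
    show "x m + y m = (\<Sum>v\<in>F \<union> G. e v * v m)"
      unfolding e_def distrib_right sum.distrib 1 2 using F G by simp
  qed
  then show ?thesis unfolding lin_span_def using F G
    by (intro CollectI exI[of _ "F \<union> G"] exI[of _ e]) auto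
qed

lemma span_comb:
  assumes "finite P" "\<And>p. p \<in> P \<Longrightarrow> f p \<in> lin_span S"
  shows "(\<lambda>m. \<Sum>p\<in>P. a p * f p m) \<in> lin_span S"
  using assms
proof (induction P rule: finite_induct)
  case empty then show ?case using span_zero by simp
next
  case (insert p P)
  have "(\<lambda>m. a p * f p m) \<in> lin_span S" using insert by (intro span_smult) auto
  moreover have "(\<lambda>m. \<Sum>p\<in>P. a p * f p m) \<in> lin_span S" using insert by auto
  ultimately have "(\<lambda>m. a p * f p m + (\<Sum>p\<in>P. a p * f p m)) \<in> lin_span S"
    by (rule span_add)
  then show ?case using insert by simp
qed

lemma span_span: "lin_span (lin_span S) = lin_span S"
proof
  show "lin_span (lin_span S) \<subseteq> lin_span S"
  proof
    fix x assume "x \<in> lin_span (lin_span S)"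
    then obtain F c where "finite F" "F \<subseteq> lin_span S" "x = (\<lambda>m. \<Sum>v\<in>F. c v * v m)"
      unfolding lin_span_def[of "lin_span S"] by blast
    then show "x \<in> lin_span S" using span_comb[of F "\<lambda>v. v" S c] by auto
  qed
qed (auto intro: span_base)

lemma span_mono: "S \<subseteq> T \<Longrightarrow> lin_span S \<subseteq> lin_span T"
  unfolding lin_span_def by blast

lemma br_S:
  assumes "finite S" "{i. x i \<noteq> 0} \<subseteq> S"
  shows "witt_bracket x y n = (\<Sum>i\<in>S. of_int (i - (n - i)) * x i * y (n - i))"
  unfolding witt_bracket_def by (rule sum.mono_neutral_left) (use assms in auto)

definition E :: "'k::field \<Rightarrow> int \<Rightarrow> int \<Rightarrow> 'k" where
  "E lam k = (\<lambda>m. (if m = k then 1 else 0) - lam powi k * (if m = -k then 1 else 0))"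

lemma E_supp: "{m. E lam k m \<noteq> 0} \<subseteq> {k, -k}"
  unfolding E_def by auto

lemma br_E:
  "witt_bracket (E lam a) y n = of_int (a - (n - a)) * y (n - a) - lam powi a * of_int (-a - (n + a)) * y (n + a)"
proof (cases "a = 0")
  case True
  have "{m. E lam a m \<noteq> 0} = {}" using True unfolding E_def by auto
  then show ?thesis unfolding witt_bracket_def using True by simp
next
  case False
  have "witt_bracket (E lam a) y n = (\<Sum>i\<in>{a,-a}. of_int (i - (n - i)) * E lam a i * y (n - i))"
    by (rule br_S) (use E_supp in auto)
  also have "\<dots> = of_int (a - (n - a)) * y (n - a) - lam powi a * of_int (-a - (n + a)) * y (n + a)"
    using False unfolding E_def by (simp add: algebra_simps)
  finally show ?thesis .
qed

lemma E_ob: "E lam k m = of_bool (m = k) - lam powi k * of_bool (m = -k)"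
  unfolding E_def by simp

lemma br_EE:
  fixes lam :: "'k::field"
  assumes "lam \<noteq> 0"
  shows "witt_bracket (E lam a) (E lam b) =
     (\<lambda>n. of_int (a - b) * E lam (a + b) n + (- of_int (a + b) * lam powi b) * E lam (a - b) n)"
proof
  fix n
  have p1: "lam powi (a + b) = lam powi a * lam powi b" using assms by (simp add: power_int_add)
  have p2: "lam powi a = lam powi b * lam powi (a - b)" using assms power_int_add[of lam b "a - b"] by simp
  have t1: "of_int (a - (n - a)) * of_bool (n - a = b) = (of_int (a - b) * of_bool (n = a + b) :: 'k)"
    by (cases "n = a + b") auto
  have t2: "of_int (a - (n - a)) * (lam powi b * of_bool (n - a = - b)) = of_int (a + b) * lam powi b * of_bool (n = a - b)"
    by (cases "n = a - b") auto
  have t3: "lam powi a * of_int (-a - (n + a)) * of_bool (n + a = b) = - (of_int (a + b) * lam powi b * lam powi (a - b) * of_bool (n = - (a - b)))"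
  proof (cases "n = - (a - b)")
    case True
    show ?thesis unfolding True using p2 by (simp add: algebra_simps)
  qed simp
  have t4: "lam powi a * of_int (-a - (n + a)) * (lam powi b * of_bool (n + a = - b)) = - (of_int (a - b) * lam powi (a + b) * of_bool (n = - (a + b)))"
  proof (cases "n = - (a + b)")
    case True
    show ?thesis unfolding True using p1 by (simp add: algebra_simps)
  qed simp
  have L: "witt_bracket (E lam a) (E lam b) n =
    of_int (a - (n - a)) * of_bool (n - a = b) - of_int (a - (n - a)) * (lam powi b * of_bool (n - a = - b))
    - lam powi a * of_int (-a - (n + a)) * of_bool (n + a = b) + lam powi a * of_int (-a - (n + a)) * (lam powi b * of_bool (n + a = - b))"
    unfolding br_E E_ob by (simp add: algebra_simps)
  have R: "of_int (a - b) * E lam (a + b) n + (- of_int (a + b) * lam powi b) * E lam (a - b) n =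
    of_int (a - b) * of_bool (n = a + b) - of_int (a - b) * lam powi (a + b) * of_bool (n = - (a + b))
    - of_int (a + b) * lam powi b * of_bool (n = a - b) + of_int (a + b) * lam powi b * lam powi (a - b) * of_bool (n = - (a - b))"
    unfolding E_ob by (simp add: algebra_simps)
  show "witt_bracket (E lam a) (E lam b) n = of_int (a - b) * E lam (a + b) n + (- of_int (a + b) * lam powi b) * E lam (a - b) n"
    unfolding L R t1 t2 t3 t4 by simp
qed


lemma comb_supp:
  fixes f :: "'p \<Rightarrow> int \<Rightarrow> 'k::field"
  shows "{m. (\<Sum>p\<in>P. a p * f p m) \<noteq> 0} \<subseteq> (\<Union>p\<in>P. {m. f p m \<noteq> 0})"
proof
  fix m assume "m \<in> {m. (\<Sum>p\<in>P. a p * f p m) \<noteq> 0}"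
  then have "(\<Sum>p\<in>P. a p * f p m) \<noteq> 0" by simp
  then have "\<exists>p\<in>P. a p * f p m \<noteq> 0" by (metis (no_types, lifting) sum.neutral)
  then obtain p where "p \<in> P" "a p * f p m \<noteq> 0" by blast
  then have "f p m \<noteq> 0" by auto
  then show "m \<in> (\<Union>p\<in>P. {m. f p m \<noteq> 0})" using \<open>p \<in> P\<close> by blast
qed

lemma comb_fin:
  fixes f :: "'p \<Rightarrow> int \<Rightarrow> 'k::field"
  assumes "finite P" "\<And>p. p \<in> P \<Longrightarrow> finite {m. f p m \<noteq> 0}"
  shows "finite {m. (\<Sum>p\<in>P. a p * f p m) \<noteq> 0}"
  by (rule finite_subset[OF comb_supp]) (use assms in auto)

lemma bilin1:
  assumes "finite F" "\<And>v. v \<in> F \<Longrightarrow> finite {m. v m \<noteq> 0}"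
  shows "witt_bracket (\<lambda>m. \<Sum>v\<in>F. c v * v m) y n = (\<Sum>v\<in>F. c v * witt_bracket v y n)"
proof -
  define S where "S = (\<Union>v\<in>F. {m. v m \<noteq> 0})"
  have S: "finite S" using assms unfolding S_def by auto
  have "witt_bracket (\<lambda>m. \<Sum>v\<in>F. c v * v m) y n
      = (\<Sum>i\<in>S. of_int (i - (n - i)) * (\<Sum>v\<in>F. c v * v i) * y (n - i))"
    by (rule br_S[OF S]) (use comb_supp[of c "\<lambda>v. v" F] in \<open>auto simp: S_def\<close>)
  also have "\<dots> = (\<Sum>i\<in>S. \<Sum>v\<in>F. c v * (of_int (i - (n - i)) * v i * y (n - i)))"
    by (rule sum.cong[OF refl]) (simp add: sum_distrib_left sum_distrib_right mult_ac)
  also have "\<dots> = (\<Sum>v\<in>F. \<Sum>i\<in>S. c v * (of_int (i - (n - i)) * v i * y (n - i)))"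
    by (rule sum.swap)
  also have "\<dots> = (\<Sum>v\<in>F. c v * (\<Sum>i\<in>S. of_int (i - (n - i)) * v i * y (n - i)))"
    by (simp add: sum_distrib_left)
  also have "\<dots> = (\<Sum>v\<in>F. c v * witt_bracket v y n)"
    by (rule sum.cong[OF refl], subst br_S[OF S]) (auto simp: S_def)
  finally show ?thesis .
qed

lemma bilin2:
  assumes "finite {m. x m \<noteq> 0}"
  shows "witt_bracket x (\<lambda>m. \<Sum>u\<in>G. d u * u m) n = (\<Sum>u\<in>G. d u * witt_bracket x u n)"
proof -
  have "witt_bracket x (\<lambda>m. \<Sum>u\<in>G. d u * u m) n = (\<Sum>i\<in>{i. x i \<noteq> 0}. \<Sum>u\<in>G. d u * (of_int (i - (n - i)) * x i * u (n - i)))"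
    unfolding witt_bracket_def
    by (rule sum.cong[OF refl]) (simp add: sum_distrib_left sum_distrib_right mult_ac)
  also have "\<dots> = (\<Sum>u\<in>G. \<Sum>i\<in>{i. x i \<noteq> 0}. d u * (of_int (i - (n - i)) * x i * u (n - i)))"
    by (rule sum.swap)
  also have "\<dots> = (\<Sum>u\<in>G. d u * witt_bracket x u n)"
    unfolding witt_bracket_def by (simp add: sum_distrib_left)
  finally show ?thesis .
qed

definition w :: "'k::field \<Rightarrow> int \<Rightarrow> 'k" where
  "w lam n = (if n > 0 \<and> even n then of_int n * lam ^ (nat n div 2) else 0)"

definition Phi :: "'k::field \<Rightarrow> (int \<Rightarrow> 'k) \<Rightarrow> 'k" where
  "Phi lam x = (\<Sum>n\<in>{n. x n \<noteq> 0}. w lam n * x n)"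

lemma Phi_S:
  assumes "finite S" "{n. x n \<noteq> 0} \<subseteq> S"
  shows "Phi lam x = (\<Sum>n\<in>S. w lam n * x n)"
  unfolding Phi_def by (rule sum.mono_neutral_left) (use assms in auto)

lemma Phi_comb:
  assumes "finite P" "\<And>p. p \<in> P \<Longrightarrow> finite {m. f p m \<noteq> 0}"
  shows "Phi lam (\<lambda>m. \<Sum>p\<in>P. a p * f p m) = (\<Sum>p\<in>P. a p * Phi lam (f p))"
proof -
  define S where "S = (\<Union>p\<in>P. {m. f p m \<noteq> 0})"
  have S: "finite S" using assms unfolding S_def by auto
  have "Phi lam (\<lambda>m. \<Sum>p\<in>P. a p * f p m) = (\<Sum>n\<in>S. w lam n * (\<Sum>p\<in>P. a p * f p n))"
    by (rule Phi_S[OF S]) (use comb_supp[of a f P] in \<open>auto simp: S_def\<close>)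
  also have "\<dots> = (\<Sum>n\<in>S. \<Sum>p\<in>P. a p * (w lam n * f p n))"
    by (rule sum.cong[OF refl]) (simp add: sum_distrib_left mult_ac)
  also have "\<dots> = (\<Sum>p\<in>P. \<Sum>n\<in>S. a p * (w lam n * f p n))"
    by (rule sum.swap)
  also have "\<dots> = (\<Sum>p\<in>P. a p * (\<Sum>n\<in>S. w lam n * f p n))"
    by (simp add: sum_distrib_left)
  also have "\<dots> = (\<Sum>p\<in>P. a p * Phi lam (f p))"
    by (rule sum.cong[OF refl], subst Phi_S[OF S]) (auto simp: S_def)
  finally show ?thesis .
qed

lemma Phi_add2:
  assumes "finite {m. x m \<noteq> 0}" "finite {m. y m \<noteq> 0}"
  shows "Phi lam (\<lambda>n. c1 * x n + c2 * y n) = c1 * Phi lam x + c2 * Phi lam y"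
proof -
  define S where "S = {m. x m \<noteq> 0} \<union> {m. y m \<noteq> 0}"
  have S: "finite S" using assms unfolding S_def by auto
  have "Phi lam (\<lambda>n. c1 * x n + c2 * y n) = (\<Sum>n\<in>S. w lam n * (c1 * x n + c2 * y n))"
    by (rule Phi_S[OF S]) (auto simp: S_def)
  also have "\<dots> = c1 * (\<Sum>n\<in>S. w lam n * x n) + c2 * (\<Sum>n\<in>S. w lam n * y n)"
    by (simp add: sum.distrib sum_distrib_left algebra_simps)
  also have "\<dots> = c1 * Phi lam x + c2 * Phi lam y"
    by (subst (1 2) Phi_S[OF S]) (auto simp: S_def)
  finally show ?thesis .
qed

lemma E_fin: "finite {m. E lam k m \<noteq> 0}"
  by (rule finite_subset[OF E_supp]) auto

lemma E_zero: "E lam 0 = (\<lambda>m. 0)"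
  unfolding E_def by auto

lemma E_neg:
  assumes "lam \<noteq> 0"
  shows "E lam k = (\<lambda>m. (- (lam powi k)) * E lam (-k) m)"
proof
  fix m
  have "lam powi k * lam powi (-k) = 1" using assms by (simp add: power_int_minus)
  then show "E lam k m = (- (lam powi k)) * E lam (-k) m"
    unfolding E_def by (auto simp: algebra_simps)
qed

definition PE :: "'k::field \<Rightarrow> int \<Rightarrow> 'k" where
  "PE lam k = (if k > 0 then w lam k else if k < 0 then - (lam powi k) * w lam (-k) else 0)"

lemma Phi_E_pos: "k > 0 \<Longrightarrow> Phi lam (E lam k) = w lam k"
proof -
  assume k: "k > 0"
  have "Phi lam (E lam k) = (\<Sum>n\<in>{k,-k}. w lam n * E lam k n)"
    by (rule Phi_S) (use E_supp in auto)
  also have "\<dots> = w lam k" using k unfolding E_def w_def by simp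
  finally show ?thesis .
qed

lemma Phi_E:
  assumes "lam \<noteq> 0"
  shows "Phi lam (E lam k) = PE lam k"
proof -
  consider "k > 0" | "k = 0" | "k < 0" by linarith
  then show ?thesis
  proof cases
    case 1 then show ?thesis by (simp add: Phi_E_pos PE_def)
  next
    case 2 then show ?thesis unfolding 2 PE_def Phi_def E_zero by simp
  next
    case 3
    have "Phi lam (E lam k) = Phi lam (\<lambda>m. (- (lam powi k)) * E lam (-k) m + 0 * E lam (-k) m)"
      by (subst E_neg[OF assms]) simp
    also have "\<dots> = (- (lam powi k)) * Phi lam (E lam (-k))"
      by (subst Phi_add2) (auto simp: E_fin)
    finally show ?thesis using 3 by (simp add: Phi_E_pos PE_def)
  qed
qed


lemma w_even: "w lam (2 * int m) = (if m > 0 then 2 * of_nat m * lam ^ m else 0)"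
  unfolding w_def by (simp add: nat_mult_distrib)

lemma w_odd: "odd n \<Longrightarrow> w lam n = 0"
  unfolding w_def by simp

lemma key:
  fixes lam :: "'k::field"
  assumes "lam \<noteq> 0"
  shows "of_int (int a - int b) * PE lam (int a + int b) + (- of_int (int a + int b) * lam powi (int b)) * PE lam (int a - int b) = 0"
proof (cases "even (a + b)")
  case False
  then have "odd (int a + int b)" "odd (int a - int b)" "odd (- (int a - int b))"
    by (simp_all add: even_add)
  then show ?thesis unfolding PE_def by (simp add: w_odd)
next
  case True
  show ?thesis
  proof (cases "b \<le> a")
    case True
    with \<open>even (a + b)\<close> obtain d where a: "a = b + 2 * d"
      by (metis add_diff_inverse_nat dvd_add_left_iff dvd_def even_add le_add_diff_inverse not_le)
    have e1: "int a + int b = 2 * int (b + d)" "int a - int b = 2 * int d" using a by simp_all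
    show ?thesis
    proof (cases "d = 0")
      case True then show ?thesis using a by (simp add: PE_def)
    next
      case False
      have P1: "PE lam (2 * int (b + d)) = 2 * of_nat (b + d) * lam ^ (b + d)"
        using False unfolding PE_def w_even by simp
      have P2: "PE lam (2 * int d) = 2 * of_nat d * lam ^ d"
        using False unfolding PE_def w_even by simp
      have "of_int (int a - int b) = (2 * of_nat d :: 'k)" "of_int (int a + int b) = (2 * of_nat (b + d) :: 'k)"
        using a by simp_all
      then show ?thesis unfolding e1 P1 P2 by (simp add: power_add algebra_simps)
    qed
  next
    case False
    with \<open>even (a + b)\<close> obtain d where b: "b = a + 2 * d" "d > 0"
      by (metis add_diff_inverse_nat dvd_add_right_iff dvd_def even_add le_add_diff_inverse not_le
          less_or_eq_imp_le nat_0_less_mult_iff zero_less_diff zero_less_numeral)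
    have e1: "int a + int b = 2 * int (a + d)" "int a - int b = - (2 * int d)" using b by simp_all
    have pw: "lam powi (int b) * lam powi (- (2 * int d)) = lam ^ a"
      using assms b power_int_add[of lam "int b" "- (2 * int d)"] by simp
    have "PE lam (int a - int b) = - (lam powi (- (2 * int d))) * (2 * of_nat d * lam ^ d)"
      unfolding e1 PE_def using b by (simp add: w_even)
    moreover have "PE lam (2 * int (a + d)) = 2 * of_nat (a + d) * lam ^ (a + d)"
      using b unfolding PE_def w_even by simp
    moreover have "of_int (int a - int b) = - (2 * of_nat d :: 'k)" "of_int (int a + int b) = (2 * of_nat (a + d) :: 'k)"
      using b by simp_all
    ultimately show ?thesis using pw unfolding e1(1)
      by (simp add: b(1) power_add algebra_simps)
  qed
qed


lemma gen_E:
  "v \<in> {(\<lambda>m. witt_L (int n) m - lam ^ n * witt_L (- int n) m) | n::nat. n \<ge> 1} \<Longrightarrow> \<exists>n\<ge>1. v = E lam (int n)"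
proof -
  assume "v \<in> {(\<lambda>m. witt_L (int n) m - lam ^ n * witt_L (- int n) m) | n::nat. n \<ge> 1}"
  then obtain n where n: "n \<ge> 1" "v = (\<lambda>m. witt_L (int n) m - lam ^ n * witt_L (- int n) m)" by blast
  then have "v = E lam (int n)" by (auto simp: E_def witt_L_def)
  then show ?thesis using n(1) by blast
qed

lemma E_gen:
  assumes "n \<ge> 1"
  shows "E lam (int n) \<in> {(\<lambda>m. witt_L (int n) m - lam ^ n * witt_L (- int n) m) | n::nat. n \<ge> 1}"
proof -
  have "E lam (int n) = (\<lambda>m. witt_L (int n) m - lam ^ n * witt_L (- int n) m)"
    by (auto simp: E_def witt_L_def)
  then show ?thesis using assms by blast
qed

lemma E_in_O:
  fixes lam :: "'k::field"
  assumes "lam \<noteq> 0"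
  shows "E lam k \<in> O_sub lam"
proof -
  have pos: "E lam k \<in> O_sub lam" if "k > 0" for k
  proof -
    define n where "n = nat k"
    have "k = int n" "n \<ge> 1" using \<open>k > 0\<close> unfolding n_def by simp_all
    then show ?thesis unfolding O_sub_def using E_gen span_base by blast
  qed
  consider "k > 0" | "k = 0" | "k < 0" by linarith
  then show ?thesis
  proof cases
    case 1 then show ?thesis by (rule pos)
  next
    case 2 then show ?thesis unfolding O_sub_def by (simp add: E_zero span_zero)
  next
    case 3
    have "E lam (-k) \<in> O_sub lam" using 3 by (intro pos) simp
    then have "(\<lambda>m. - (lam powi k) * E lam (-k) m) \<in> O_sub lam" unfolding O_sub_def by (rule span_smult)
    then show ?thesis by (subst E_neg[OF assms])
  qed
qed

lemma O_rep:
  assumes "x \<in> O_sub lam"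
  shows "\<exists>F c. finite F \<and> (\<forall>v\<in>F. \<exists>n\<ge>1. v = E lam (int n)) \<and> x = (\<lambda>m. \<Sum>v\<in>F. c v * v m)"
proof -
  obtain F c where F: "finite F" "F \<subseteq> {(\<lambda>m. witt_L (int n) m - lam ^ n * witt_L (- int n) m) | n::nat. n \<ge> 1}"
    "x = (\<lambda>m. \<Sum>v\<in>F. c v * v m)"
    using assms unfolding O_sub_def lin_span_def mem_Collect_eq by blast
  have "\<forall>v\<in>F. \<exists>n\<ge>1. v = E lam (int n)"
  proof
    fix v assume "v \<in> F" then show "\<exists>n\<ge>1. v = E lam (int n)" using F(2) by (intro gen_E) blast
  qed
  then show ?thesis using F(1,3) by blast
qed

lemma O_fin:
  assumes "x \<in> O_sub lam"
  shows "finite {m. x m \<noteq> 0}"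
proof -
  obtain F c where "finite F" "\<forall>v\<in>F. \<exists>n\<ge>1. v = E lam (int n)" "x = (\<lambda>m. \<Sum>v\<in>F. c v * v m)"
    using O_rep[OF assms] by blast
  then show ?thesis using comb_fin[of F "\<lambda>v. v" c] E_fin by fastforce
qed

lemma br_gen:
  fixes lam :: "'k::field"
  assumes "lam \<noteq> 0"
  shows "witt_bracket (E lam (int a)) (E lam (int b)) \<in> O_sub lam
    \<and> finite {m. witt_bracket (E lam (int a)) (E lam (int b)) m \<noteq> 0}
    \<and> Phi lam (witt_bracket (E lam (int a)) (E lam (int b))) = 0"
proof (intro conjI)
  note eq = br_EE[OF assms, of "int a" "int b"]
  show "witt_bracket (E lam (int a)) (E lam (int b)) \<in> O_sub lam"
    unfolding eq O_sub_def by (intro span_add span_smult E_in_O[unfolded O_sub_def] assms)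
  show "finite {m. witt_bracket (E lam (int a)) (E lam (int b)) m \<noteq> 0}"
    unfolding eq by (rule finite_subset[of _ "{m. E lam (int a + int b) m \<noteq> 0} \<union> {m. E lam (int a - int b) m \<noteq> 0}"]) (auto simp: E_fin)
  show "Phi lam (witt_bracket (E lam (int a)) (E lam (int b))) = 0"
    unfolding eq using key[OF assms, of a b] by (subst Phi_add2) (simp_all add: E_fin Phi_E[OF assms])
qed

lemma br_O:
  fixes lam :: "'k::field"
  assumes "lam \<noteq> 0" "x \<in> O_sub lam" "y \<in> O_sub lam"
  shows "witt_bracket x y \<in> O_sub lam \<and> Phi lam (witt_bracket x y) = 0"
proof -
  obtain F c where F: "finite F" "\<forall>v\<in>F. \<exists>n\<ge>1. v = E lam (int n)" "x = (\<lambda>m. \<Sum>v\<in>F. c v * v m)"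
    using O_rep[OF assms(2)] by blast
  obtain G d where G: "finite G" "\<forall>v\<in>G. \<exists>n\<ge>1. v = E lam (int n)" "y = (\<lambda>m. \<Sum>v\<in>G. d v * v m)"
    using O_rep[OF assms(3)] by blast
  have fF: "finite {m. v m \<noteq> 0}" if "v \<in> F" for v
  proof -
    from bspec[OF F(2) that] obtain n where "v = E lam (int n)" by (elim exE conjE)
    then show ?thesis using E_fin by simp
  qed
  have gen: "witt_bracket (fst p) (snd p) \<in> O_sub lam
    \<and> finite {m. witt_bracket (fst p) (snd p) m \<noteq> 0}
    \<and> Phi lam (witt_bracket (fst p) (snd p)) = 0" if "p \<in> F \<times> G" for p
  proof -
    from that have "fst p \<in> F" "snd p \<in> G" by auto
    from bspec[OF F(2) \<open>fst p \<in> F\<close>] obtain a where "fst p = E lam (int a)" by (elim exE conjE)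
    moreover from bspec[OF G(2) \<open>snd p \<in> G\<close>] obtain b where "snd p = E lam (int b)" by (elim exE conjE)
    ultimately show ?thesis using br_gen[OF assms(1), of a b] by simp
  qed
  have eq: "witt_bracket x y = (\<lambda>n. \<Sum>p\<in>F \<times> G. (c (fst p) * d (snd p)) * witt_bracket (fst p) (snd p) n)"
  proof
    fix n
    have "witt_bracket x y n = (\<Sum>v\<in>F. c v * witt_bracket v y n)"
      unfolding F(3) by (rule bilin1[OF F(1) fF])
    also have "\<dots> = (\<Sum>v\<in>F. c v * (\<Sum>u\<in>G. d u * witt_bracket v u n))"
      unfolding G(3) by (rule sum.cong[OF refl]) (simp add: bilin2 fF)
    also have "\<dots> = (\<Sum>v\<in>F. \<Sum>u\<in>G. (c v * d u) * witt_bracket v u n)"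
      by (simp add: sum_distrib_left mult.assoc)
    also have "\<dots> = (\<Sum>p\<in>F \<times> G. (c (fst p) * d (snd p)) * witt_bracket (fst p) (snd p) n)"
      by (simp add: sum.cartesian_product split_def)
    finally show "witt_bracket x y n = \<dots>" .
  qed
  show ?thesis
  proof
    show "witt_bracket x y \<in> O_sub lam"
      unfolding eq O_sub_def
    proof (rule span_comb)
      show "finite (F \<times> G)" using F(1) G(1) by simp
      fix p assume "p \<in> F \<times> G"
      from gen[OF this] have "witt_bracket (fst p) (snd p) \<in> O_sub lam" by (rule conjE)
      then show "witt_bracket (fst p) (snd p) \<in> lin_span {(\<lambda>m. witt_L (int n) m - lam ^ n * witt_L (- int n) m) | n::nat. n \<ge> 1}"
        unfolding O_sub_def .
    qed
    have "Phi lam (witt_bracket x y) = (\<Sum>p\<in>F \<times> G. (c (fst p) * d (snd p)) * Phi lam (witt_bracket (fst p) (snd p)))"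
      unfolding eq
    proof (rule Phi_comb)
      show "finite (F \<times> G)" using F(1) G(1) by simp
      fix p assume "p \<in> F \<times> G"
      from gen[OF this] show "finite {m. witt_bracket (fst p) (snd p) m \<noteq> 0}" by (rule conjE) (erule conjE)
    qed
    also have "\<dots> = 0"
    proof (rule sum.neutral, rule ballI)
      fix p assume "p \<in> F \<times> G"
      from gen[OF this] have "Phi lam (witt_bracket (fst p) (snd p)) = 0" by (rule conjE) (erule conjE)
      then show "c (fst p) * d (snd p) * Phi lam (witt_bracket (fst p) (snd p)) = 0" by simp
    qed
    finally show "Phi lam (witt_bracket x y) = 0" .
  qed
qed

lemma mem_brI: "x \<in> g \<Longrightarrow> y \<in> g \<Longrightarrow> witt_bracket x y \<in> {witt_bracket x y | x y. x \<in> g \<and> y \<in> g}"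
  by blast

lemma mem_brE:
  assumes "v \<in> {witt_bracket x y | x y. x \<in> g \<and> y \<in> g}"
  obtains x y where "v = witt_bracket x y" "x \<in> g" "y \<in> g"
  using assms unfolding mem_Collect_eq by (elim exE conjE)

lemma mem_spanE:
  assumes "z \<in> lin_span S"
  obtains F c where "finite F" "F \<subseteq> S" "z = (\<lambda>m. \<Sum>v\<in>F. c v * v m)"
  using assms unfolding lin_span_def mem_Collect_eq by (elim exE conjE)

theorem corollary4p19:
  fixes lam :: "'k::field_char_0"
  assumes "lam \<noteq> 0"
  shows "\<not> perfect (O_sub lam) \<and> \<not> simple_lie (O_sub lam)"
proof -
  let ?O = "O_sub lam"
  let ?D = "derived ?O"
  have BO: "{witt_bracket x y | x y. x \<in> ?O \<and> y \<in> ?O} \<subseteq> ?O"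
  proof
    fix v assume "v \<in> {witt_bracket x y | x y. x \<in> ?O \<and> y \<in> ?O}"
    then obtain x y where "v = witt_bracket x y" "x \<in> ?O" "y \<in> ?O" by (rule mem_brE)
    then show "v \<in> ?O" using br_O[OF assms] by simp
  qed
  have DO: "?D \<subseteq> ?O"
  proof -
    have "?D \<subseteq> lin_span ?O" unfolding derived_def using BO by (rule span_mono)
    also have "\<dots> = ?O" unfolding O_sub_def span_span ..
    finally show ?thesis .
  qed
  have Dker: "Phi lam z = 0" if "z \<in> ?D" for z
  proof -
    from that obtain F c where F: "finite F" "F \<subseteq> {witt_bracket x y | x y. x \<in> ?O \<and> y \<in> ?O}" "z = (\<lambda>m. \<Sum>v\<in>F. c v * v m)"
      unfolding derived_def by (rule mem_spanE)
    have vF: "v \<in> ?O \<and> Phi lam v = 0" if "v \<in> F" for v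
    proof -
      from F(2) that have "v \<in> {witt_bracket x y | x y. x \<in> ?O \<and> y \<in> ?O}" by (rule subsetD)
      then obtain x y where "v = witt_bracket x y" "x \<in> ?O" "y \<in> ?O" by (rule mem_brE)
      then show ?thesis using br_O[OF assms] by simp
    qed
    have "Phi lam z = (\<Sum>v\<in>F. c v * Phi lam v)"
      unfolding F(3)
    proof (rule Phi_comb[OF F(1)])
      fix v assume "v \<in> F"
      then have "v \<in> ?O" using vF by simp
      then show "finite {m. v m \<noteq> 0}" by (rule O_fin)
    qed
    also have "\<dots> = 0" using vF by simp
    finally show ?thesis .
  qed
  have E2: "E lam 2 \<in> ?O" by (rule E_in_O[OF assms])
  have "Phi lam (E lam 2) = 2 * lam"
    using Phi_E_pos[of 2 lam] w_even[of lam 1] by simp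
  then have P2: "Phi lam (E lam 2) \<noteq> 0" using assms by simp
  have E2D: "E lam 2 \<notin> ?D"
  proof
    assume "E lam 2 \<in> ?D"
    then have "Phi lam (E lam 2) = 0" by (rule Dker)
    with P2 show False by simp
  qed
  have DneO: "?D \<noteq> ?O"
  proof
    assume "?D = ?O"
    with E2 E2D show False by simp
  qed
  have np: "\<not> perfect ?O" unfolding perfect_def using DneO by simp
  have ideal: "lie_ideal ?O ?D"
    unfolding lie_ideal_def
  proof (intro conjI ballI)
    show "?D \<subseteq> ?O" by (rule DO)
    show "lin_span ?D = ?D" unfolding derived_def span_span ..
    fix x y assume "x \<in> ?O" "y \<in> ?D"
    then have "y \<in> ?O" using DO by (rule_tac subsetD) auto
    with \<open>x \<in> ?O\<close> show "witt_bracket x y \<in> ?D" unfolding derived_def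
      by (intro span_base mem_brI)
  qed
  have E1: "E lam 1 \<in> ?O" by (rule E_in_O[OF assms])
  have bD: "witt_bracket (E lam 2) (E lam 1) \<in> ?D"
    unfolding derived_def using E2 E1 by (intro span_base mem_brI)
  have "witt_bracket (E lam 2) (E lam 1) 3 = 1"
    unfolding br_EE[OF assms] by (simp add: E_def)
  then have nz: "witt_bracket (E lam 2) (E lam 1) \<noteq> (\<lambda>_. 0)" by (metis one_neq_zero)
  have Dne0: "?D \<noteq> {\<lambda>_. 0}"
  proof
    assume "?D = {\<lambda>_. 0}"
    with bD have "witt_bracket (E lam 2) (E lam 1) = (\<lambda>_. 0)" by simp
    with nz show False by simp
  qed
  have ns: "\<not> simple_lie ?O"
  proof
    assume "simple_lie ?O"
    then have H: "\<forall>I. lie_ideal ?O I \<longrightarrow> I = {\<lambda>_. 0} \<or> I = ?O"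
      unfolding simple_lie_def by (elim conjE)
    have "?D = {\<lambda>_. 0} \<or> ?D = ?O" using mp[OF spec[OF H, of ?D] ideal] .
    with Dne0 DneO show False by simp
  qed
  from np ns show ?thesis by (rule conjI)
qed

end
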